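(* Let $T$ be a standard Young tableau with distinct positive integer entries, and let $s$ be an entry of $T$. Let $r<s$ be an integer such that no entry of $T$ lies in the open interval $(r,s)$, and let $k$ be a positive integer with $k\leq s-r$. Choose $k-1$ integers $r<r_1<\cdots<r_{k-1}<s$, and let $T'$ be the tableau obtained from $T$ by column inserting $r_{k-1},r_{k-2},\dots,r_1$ in that order. Then: (1) $c_{T'}(r_i)=i$ for $1\le i\le k-1$, and $c_{T'}(s)=m$, where $m=\max\{c_T(s),k\}$; (2) if $s'$ is an entry of $T$ with $s'>s$, then either $c_{T'}(s')=c_T(s')$ or $c_{T'}(s')\leq m+n$, where $m$ is as in (1) and $n$ is the number of entries of $T$ lying in the half-open interval $[s,s')$.
   Context: For a tableau $T$ and an entry $a$ of $T$, $c_T(a)$ denotes the index of the column of $T$ containing $a$ (columns numbered from $1$ starting on the left). Column insertion of a number $a$ into a tableau: place $a$ in the first column, bumping the smallest entry of that column larger than $a$ (if any); the bumped entry is then inserted into the second column in the same way, and so on, until an entry is placed at the bottom of a column without bumping. *)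

theory Defs
  imports Main
begin

text \<open>A tableau is represented as the list of its columns (left to right);
each column is listed top to bottom. Entries are integers.\<close>

type_synonym tableau = "int list list"

definition entries :: "tableau \<Rightarrow> int set" where
  "entries T = (\<Union>c\<in>set T. set c)"

definition standard :: "tableau \<Rightarrow> bool" where
  "standard T \<longleftrightarrow>
     (\<forall>j < length T. T ! j \<noteq> []) \<and>
     (\<forall>j. Suc j < length T \<longrightarrow> length (T ! Suc j) \<le> length (T ! j)) \<and>
     (\<forall>j < length T. sorted_wrt (<) (T ! j)) \<and>
     (\<forall>j i. Suc j < length T \<longrightarrow> i < length (T ! Suc j) \<longrightarrow> T ! j ! i < T ! Suc j ! i) \<and>
     distinct (concat T)"

definition col :: "tableau \<Rightarrow> int \<Rightarrow> nat" where
  "col T a = Suc (LEAST j. j < length T \<and> a \<in> set (T ! j))"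

fun col_insert :: "int \<Rightarrow> tableau \<Rightarrow> tableau" where
  "col_insert a [] = [[a]]"
| "col_insert a (c # cs) =
     (if \<exists>x\<in>set c. a < x
      then (let i = (LEAST i. i < length c \<and> a < c ! i)
            in c[i := a] # col_insert (c ! i) cs)
      else (c @ [a]) # cs)"

end

theory Submission imports Defs begin

lemma entries_Cons[simp]: "entries (c # cs) = set c \<union> entries cs"
  by (simp add: entries_def)
lemma entries_Nil[simp]: "entries [] = {}"
  by (simp add: entries_def)
lemma finite_entries[simp]: "finite (entries T)"
  by (simp add: entries_def)

lemma col_insert_entries: "entries (col_insert x T) = insert x (entries T)"
proof (induction T arbitrary: x)
  case Nil then show ?case by simp
next
  case (Cons c cs)
  show ?case
  proof (cases "\<exists>z\<in>set c. x < z")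
    case True
    define i where "i = (LEAST i. i < length c \<and> x < c ! i)"
    have ex: "\<exists>i. i < length c \<and> x < c ! i" using True by (auto simp: in_set_conv_nth)
    have i: "i < length c \<and> x < c ! i" unfolding i_def by (rule LeastI_ex[OF ex])
    have e: "col_insert x (c # cs) = c[i := x] # col_insert (c ! i) cs"
      using True by (simp add: i_def Let_def)
    have "set (c[i := x]) \<subseteq> insert x (set c)" by (rule set_update_subset_insert)
    moreover have "set c \<subseteq> insert (c!i) (set (c[i := x]))"
      using i by (auto simp: in_set_conv_nth nth_list_update) (metis)
    moreover have "c ! i \<in> set c" using i by simp
    moreover have "x \<in> set (c[i:=x])" using i by (simp add: set_update_memI)
    ultimately show ?thesis using e Cons.IH by auto
  next
    case False
    then show ?thesis by simp
  qed
qed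


lemma col_eqI: "(\<And>j. (j < length A \<and> y \<in> set (A!j)) = (j < length B \<and> y \<in> set (B!j))) \<Longrightarrow> col A y = col B y"
  by (simp add: col_def)

lemma col_Cons_in: "y \<in> set c \<Longrightarrow> col (c#cs) y = 1"
  unfolding col_def by (simp add: Least_equality)

lemma col_Cons_notin: assumes "y \<notin> set c" "y \<in> entries cs"
  shows "col (c#cs) y = Suc (col cs y)"
proof -
  from assms(2) obtain j where j: "j < length cs" "y \<in> set (cs!j)" unfolding entries_def by (metis UN_E in_set_conv_nth)
  have "(LEAST j. j < length (c#cs) \<and> y \<in> set ((c#cs)!j)) = Suc (LEAST j. j < length cs \<and> y \<in> set (cs!j))"
    using Least_Suc[where n="Suc j" and P="\<lambda>j. j < length (c#cs) \<and> y \<in> set ((c#cs)!j)"] j assms(1) by simp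
  then show ?thesis by (simp add: col_def)
qed

lemma col_notin: "y \<notin> entries A \<Longrightarrow> y \<notin> entries B \<Longrightarrow> col A y = col B y"
  by (rule col_eqI) (auto simp: entries_def)

lemma col_insert_ex:
  assumes "\<exists>z\<in>set c. x < z"
  obtains i where "i < length c" "x < c ! i" "\<forall>i'<i. \<not> x < c ! i'"
    "col_insert x (c # cs) = c[i := x] # col_insert (c ! i) cs"
proof -
  define i where "i = (LEAST i. i < length c \<and> x < c ! i)"
  have ex: "\<exists>i. i < length c \<and> x < c ! i" using assms by (auto simp: in_set_conv_nth)
  have i: "i < length c \<and> x < c ! i" unfolding i_def by (rule LeastI_ex[OF ex])
  have "\<forall>i'<i. \<not> x < c ! i'"
  proof (intro allI impI)
    fix i' assume "i' < i"
    then have "\<not> (i' < length c \<and> x < c ! i')" unfolding i_def by (rule not_less_Least)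
    then show "\<not> x < c ! i'" using \<open>i' < i\<close> i by auto
  qed
  moreover have "col_insert x (c # cs) = c[i := x] # col_insert (c ! i) cs"
    using assms by (simp add: i_def Let_def)
  ultimately show ?thesis using that i by blast
qed

lemma col_insert_less: "y < x \<Longrightarrow> col (col_insert x T) y = col T y"
proof (induction T arbitrary: x)
  case Nil
  then show ?case by (intro col_notin) auto
next
  case (Cons c cs)
  show ?case
  proof (cases "\<exists>z\<in>set c. x < z")
    case True
    then obtain i where i: "i < length c" "x < c ! i"
      and e: "col_insert x (c # cs) = c[i := x] # col_insert (c ! i) cs"
      by (rule col_insert_ex)
    have IH: "col (col_insert (c!i) cs) y = col cs y" using Cons i by auto
    have mem: "y \<in> set (c[i:=x]) \<longleftrightarrow> y \<in> set c"
      using i Cons.prems by (auto simp: in_set_conv_nth nth_list_update) (metis less_irrefl order.strict_trans)+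
    have ent: "y \<in> entries (col_insert (c!i) cs) \<longleftrightarrow> y \<in> entries cs"
      using i Cons.prems by (auto simp: col_insert_entries)
    show ?thesis
    proof (cases "y \<in> set c")
      case True then show ?thesis using e mem by (simp add: col_Cons_in)
    next
      case False
      show ?thesis
      proof (cases "y \<in> entries cs")
        case True then show ?thesis using e mem ent False IH by (simp add: col_Cons_notin)
      next
        case f2: False then show ?thesis using e mem ent False
          by (intro col_notin) (auto simp: col_insert_entries)
      qed
    qed
  next
    case False
    then have e: "col_insert x (c # cs) = (c @ [x]) # cs" by simp
    show ?thesis unfolding e using Cons.prems by (intro col_eqI) (auto simp: nth_Cons split: nat.splits)
  qed
qed


lemma col_insert_first: "\<exists>a rest. col_insert x T = a # rest \<and> x \<in> set a"
proof (cases T)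
  case (Cons c cs)
  show ?thesis
  proof (cases "\<exists>z\<in>set c. x < z")
    case True
    then obtain i where i: "i < length c"
      and e: "col_insert x (c # cs) = c[i := x] # col_insert (c ! i) cs"
      by (rule col_insert_ex)
    then show ?thesis using Cons by (auto simp: set_update_memI)
  qed (use Cons in auto)
qed simp

lemma col_insert_bound:
  "col (col_insert x T) y \<noteq> col T y \<Longrightarrow>
   col (col_insert x T) y \<le> Suc (card {z \<in> insert x (entries T). x \<le> z \<and> z < y})"
proof (induction T arbitrary: x)
  case Nil
  then show ?case by (cases "y = x") (auto simp: col_Cons_in col_notin)
next
  case (Cons c cs)
  show ?case
  proof (cases "\<exists>z\<in>set c. x < z")
    case True
    then obtain i where i: "i < length c" "x < c ! i"
      and e: "col_insert x (c # cs) = c[i := x] # col_insert (c ! i) cs"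
      by (rule col_insert_ex)
    define B where "B = {z \<in> insert x (entries (c#cs)). x \<le> z \<and> z < y}"
    have finB: "finite B" unfolding B_def by simp
    show ?thesis
    proof (cases "y \<in> set (c[i:=x])")
      case True then show ?thesis using e by (simp add: col_Cons_in)
    next
      case ny: False
      show ?thesis
      proof (cases "y \<in> set c")
        case True
        then have "y = c ! i" using ny i
          by (auto simp: in_set_conv_nth nth_list_update) (metis)
        then have "col (col_insert x (c # cs)) y = 2"
        proof -
          obtain a rest where ar: "col_insert (c!i) cs = a # rest" "c!i \<in> set a"
            using col_insert_first by blast
          show ?thesis using e ny ar \<open>y = c!i\<close> by (simp add: col_Cons_in col_Cons_notin)
        qed
        moreover have "x \<in> B" using \<open>y = c!i\<close> i unfolding B_def by auto
        then have "card B \<ge> 1" using finB by (metis One_nat_def Suc_leI card_gt_0_iff empty_iff)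
        ultimately show ?thesis unfolding B_def by simp
      next
        case nc: False
        show ?thesis
        proof (cases "y \<in> entries cs")
          case False
          then have "y \<notin> entries (col_insert x (c # cs))" "y \<notin> entries (c#cs)"
            using nc ny e \<open>x < c!i\<close> i by (auto simp: col_insert_entries)
          then show ?thesis using Cons.prems col_notin by blast
        next
          case True
          have ent: "y \<in> entries (col_insert (c!i) cs)" using True by (simp add: col_insert_entries)
          have e1: "col (col_insert x (c # cs)) y = Suc (col (col_insert (c!i) cs) y)"
            using e ny ent by (simp add: col_Cons_notin)
          have e2: "col (c # cs) y = Suc (col cs y)" using nc True by (simp add: col_Cons_notin)
          have ne: "col (col_insert (c!i) cs) y \<noteq> col cs y" using Cons.prems e1 e2 by simp
          then have "\<not> y < c ! i" using col_insert_less by metis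
          have IH: "col (col_insert (c!i) cs) y \<le> Suc (card {z \<in> insert (c!i) (entries cs). c!i \<le> z \<and> z < y})"
            using Cons.IH ne by blast
          define A where "A = {z \<in> insert (c!i) (entries cs). c!i \<le> z \<and> z < y}"
          have "insert x A \<subseteq> B" unfolding A_def B_def using i \<open>\<not> y < c ! i\<close> True nc
            by auto
          moreover have "x \<notin> A" unfolding A_def using i by auto
          moreover have "finite A" unfolding A_def by simp
          ultimately have "Suc (card A) \<le> card B" using finB
            by (metis card_insert_disjoint card_mono)
          then show ?thesis using e1 IH unfolding A_def B_def by simp
        qed
      qed
    qed
  next
    case False
    then have e: "col_insert x (c # cs) = (c @ [x]) # cs" by simp
    have "y = x"
    proof (rule ccontr)
      assume "y \<noteq> x"
      then have "col (col_insert x (c # cs)) y = col (c#cs) y"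
        unfolding e by (intro col_eqI) (auto simp: nth_Cons split: nat.splits)
      then show False using Cons.prems by simp
    qed
    then show ?thesis using e by (simp add: col_Cons_in)
  qed
qed


fun ins :: "int \<Rightarrow> int set list \<Rightarrow> int set list" where
  "ins x [] = [{x}]"
| "ins x (C # Cs) = (if \<exists>z\<in>C. x < z
     then insert x (C - {Min {z\<in>C. x < z}}) # ins (Min {z\<in>C. x < z}) Cs
     else insert x C # Cs)"

lemma col_insert_sets:
  assumes "\<forall>c\<in>set T. sorted_wrt (<) c" "distinct (concat T)" "x \<notin> entries T"
  shows "map set (col_insert x T) = ins x (map set T) \<and> (\<forall>c\<in>set (col_insert x T). sorted_wrt (<) c)
     \<and> distinct (concat (col_insert x T))"
  using assms
proof (induction T arbitrary: x)
  case Nil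
  then show ?case by simp
next
  case (Cons c cs)
  have sc: "sorted_wrt (<) c" and xc: "x \<notin> set c" and dc: "distinct c"
    and dcs: "distinct (concat cs)" and disj: "set c \<inter> entries cs = {}" and xcs: "x \<notin> entries cs"
    using Cons.prems by (auto simp: strict_sorted_iff entries_def)
  show ?case
  proof (cases "\<exists>z\<in>set c. x < z")
    case True
    then obtain i where i: "i < length c" "x < c ! i" and bef: "\<forall>i'<i. \<not> x < c ! i'"
      and e: "col_insert x (c # cs) = c[i := x] # col_insert (c ! i) cs"
      by (rule col_insert_ex)
    have Min: "Min {z\<in>set c. x < z} = c ! i"
    proof (rule Min_eqI)
      fix z assume "z \<in> {z\<in>set c. x < z}"
      then obtain j where j: "j < length c" "z = c ! j" "x < c ! j" by (auto simp: in_set_conv_nth)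
      then have "\<not> j < i" using bef by auto
      then show "c ! i \<le> z" using j sc i by (cases "i = j") (auto simp: sorted_wrt_iff_nth_less less_imp_le nat_neq_iff)
    qed (use i in auto)
    have su: "set (c[i:=x]) = insert x (set c - {c ! i})" using dc i(1) by (rule set_update_distinct)
    have sorted': "sorted_wrt (<) (c[i:=x])"
      unfolding sorted_wrt_iff_nth_less
    proof (intro allI impI)
      fix a b assume ab: "a < b" "b < length (c[i:=x])"
      have lt: "\<And>a b. a < b \<Longrightarrow> b < length c \<Longrightarrow> c ! a < c ! b" using sc by (simp add: sorted_wrt_iff_nth_less)
      have lx: "\<And>a. a < i \<Longrightarrow> c ! a < x"
      proof -
        fix a assume "a < i"
        then have "c ! a \<le> x" using bef by (meson not_less)
        moreover have "c ! a \<noteq> x" using xc \<open>a < i\<close> i by (metis nth_mem order.strict_trans)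
        ultimately show "c ! a < x" by simp
      qed
      show "c[i := x] ! a < c[i := x] ! b"
        using ab i lt lx by (auto simp: nth_list_update) (meson lt order.strict_trans)+
    qed
    have cics: "c ! i \<notin> entries cs" using disj i by (meson disjoint_iff nth_mem)
    have IH: "map set (col_insert (c!i) cs) = ins (c!i) (map set cs) \<and> (\<forall>c\<in>set (col_insert (c!i) cs). sorted_wrt (<) c)
     \<and> distinct (concat (col_insert (c!i) cs))"
      using Cons.IH[of "c!i"] Cons.prems cics by auto
    have ent: "entries (col_insert (c!i) cs) = insert (c!i) (entries cs)" by (rule col_insert_entries)
    have "distinct (concat (col_insert x (c # cs)))"
      unfolding e using IH sorted' su ent xcs disj i dc
      by (auto simp: strict_sorted_iff entries_def)
    moreover have "map set (col_insert x (c # cs)) = ins x (map set (c # cs))"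
      unfolding e using True Min su IH by simp
    ultimately show ?thesis using e sorted' IH by simp
  next
    case False
    then have e: "col_insert x (c # cs) = (c @ [x]) # cs" by simp
    have "\<forall>z\<in>set c. z < x" using False xc by (metis linorder_neqE)
    then have "sorted_wrt (<) (c @ [x])" using sc by (simp add: sorted_wrt_append)
    then show ?thesis unfolding e using False Cons.prems xc xcs by (auto simp: entries_def)
  qed
qed


definition at :: "int set list \<Rightarrow> nat \<Rightarrow> int \<Rightarrow> bool" where
  "at Cs p y \<longleftrightarrow> p < length Cs \<and> y \<in> Cs!p \<and> (\<forall>i<p. y \<notin> Cs!i)"

lemma at_Nil[simp]: "\<not> at [] p y" by (simp add: at_def)
lemma at_0[simp]: "at (C#Cs) 0 y \<longleftrightarrow> y \<in> C" by (simp add: at_def)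
lemma at_Suc[simp]: "at (C#Cs) (Suc p) y \<longleftrightarrow> y \<notin> C \<and> at Cs p y"
  unfolding at_def by (simp only: All_less_Suc2 length_Cons) auto

lemma col_at: "at (map set T) p y \<Longrightarrow> col T y = Suc p"
proof -
  assume a: "at (map set T) p y"
  have "(LEAST j. j < length T \<and> y \<in> set (T!j)) = p"
  proof (rule Least_equality)
    show "p < length T \<and> y \<in> set (T!p)" using a by (auto simp: at_def)
    fix m assume "m < length T \<and> y \<in> set (T!m)"
    then show "p \<le> m" using a unfolding at_def by (metis leI nth_map order.strict_trans)
  qed
  then show ?thesis by (simp add: col_def)
qed

lemma at_col: assumes "y \<in> entries T" shows "at (map set T) (col T y - 1) y"
proof -
  have ex: "\<exists>j. j < length T \<and> y \<in> set (T!j)" using assms unfolding entries_def by (metis UN_E in_set_conv_nth)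
  let ?P = "\<lambda>j. j < length T \<and> y \<in> set (T!j)"
  have "?P (LEAST j. ?P j)" by (rule LeastI_ex[OF ex])
  moreover have "\<forall>i<(LEAST j. ?P j). \<not> ?P i" using not_less_Least by blast
  ultimately have "at (map set T) (LEAST j. ?P j) y" unfolding at_def
    by (metis (no_types, lifting) length_map nth_map order.strict_trans)
  then show ?thesis by (simp add: col_def)
qed

lemma min_props:
  assumes "finite C" "\<exists>z\<in>C. x < z"
  shows "Min {z\<in>C. x < z} \<in> C" "x < Min {z\<in>C. x < z}" "\<And>z. z \<in> C \<Longrightarrow> x < z \<Longrightarrow> Min {z\<in>C. x < z} \<le> z"
proof -
  have f: "finite {z\<in>C. x < z}" "{z\<in>C. x < z} \<noteq> {}" using assms by auto
  show "Min {z\<in>C. x < z} \<in> C" "x < Min {z\<in>C. x < z}" using Min_in[OF f] by auto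
  show "\<And>z. z \<in> C \<Longrightarrow> x < z \<Longrightarrow> Min {z\<in>C. x < z} \<le> z" using Min_le[OF f(1)] by auto
qed

lemma ins_first: "at (ins x Cs) 0 x"
  by (cases Cs) auto

lemma ins_less: "\<forall>C\<in>set Cs. finite C \<Longrightarrow> y < x \<Longrightarrow> at Cs p y \<Longrightarrow> at (ins x Cs) p y"
proof (induction Cs arbitrary: x p)
  case Nil then show ?case by simp
next
  case (Cons C Cs)
  show ?case
  proof (cases "\<exists>z\<in>C. x < z")
    case True
    note m = min_props[of C x, OF _ True]
    show ?thesis
    proof (cases p)
      case 0 then show ?thesis using True Cons.prems m by auto
    next
      case (Suc p')
      define b where "b = Min {z\<in>C. x < z}"
      have b: "b \<in> C" "x < b" using m Cons.prems unfolding b_def by auto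
      have e: "ins x (C # Cs) = insert x (C - {b}) # ins b Cs" using True b_def by simp
      have "y \<notin> C" "at Cs p' y" using Cons.prems Suc by auto
      moreover have "at (ins b Cs) p' y" using Cons.IH[of b p'] Cons.prems b \<open>at Cs p' y\<close> by simp
      ultimately show ?thesis using e Suc Cons.prems(2) by simp
    qed
  next
    case False
    then show ?thesis using Cons.prems by (cases p) auto
  qed
qed

lemma ins_union: "\<forall>C\<in>set Cs. finite C \<Longrightarrow> D \<in> set (ins x Cs) \<Longrightarrow> D \<subseteq> insert x (\<Union>(set Cs))"
proof (induction Cs arbitrary: x D)
  case Nil then show ?case by simp
next
  case (Cons C Cs)
  have fC: "finite C" and fCs: "\<forall>C\<in>set Cs. finite C" using Cons.prems(1) by simp_all
  show ?case
  proof (cases "\<exists>z\<in>C. x < z")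
    case True
    define b where "b = Min {z\<in>C. x < z}"
    have b: "b \<in> C" using min_props(1)[OF fC True] unfolding b_def .
    have e: "ins x (C # Cs) = insert x (C - {b}) # ins b Cs" using True b_def by simp
    from Cons.prems(2) e have "D = insert x (C - {b}) \<or> D \<in> set (ins b Cs)" by simp
    then show ?thesis
    proof
      assume "D \<in> set (ins b Cs)"
      then have "D \<subseteq> insert b (\<Union>(set Cs))" using Cons.IH[OF fCs] by blast
      then show ?thesis using b by auto
    qed auto
  next
    case False
    then have e: "ins x (C # Cs) = insert x C # Cs" by simp
    from Cons.prems(2) e have "D = insert x C \<or> D \<in> set Cs" by simp
    then show ?thesis by auto
  qed
qed

definition cls :: "int \<Rightarrow> int \<Rightarrow> int list \<Rightarrow> int set list \<Rightarrow> bool" where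
  "cls r s ys Cs \<longleftrightarrow> (\<forall>i<length Cs. \<forall>z\<in>Cs!i. z \<le> r \<or> s \<le> z \<or> (i < length ys \<and> z = ys!i))"

definition hasr :: "int list \<Rightarrow> int set list \<Rightarrow> bool" where
  "hasr ys Cs \<longleftrightarrow> length ys \<le> length Cs \<and> (\<forall>i<length ys. ys!i \<in> Cs!i)"

lemma cls_Nil_list: "cls r s [] Cs \<longleftrightarrow> (\<forall>C\<in>set Cs. \<forall>z\<in>C. z \<le> r \<or> s \<le> z)"
  by (simp add: cls_def all_set_conv_all_nth)

lemma cls_Cons2: "cls r s (y#ys) (C#Cs) \<longleftrightarrow> (\<forall>z\<in>C. z \<le> r \<or> s \<le> z \<or> z = y) \<and> cls r s ys Cs"
proof -
  have "cls r s (y#ys) (C#Cs) \<longleftrightarrow> (\<forall>i<Suc (length Cs). \<forall>z\<in>(C#Cs)!i. z \<le> r \<or> s \<le> z \<or> (i < Suc (length ys) \<and> z = (y#ys)!i))"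
    by (simp add: cls_def)
  also have "\<dots> \<longleftrightarrow> (\<forall>z\<in>C. z \<le> r \<or> s \<le> z \<or> z = y) \<and> (\<forall>i<length Cs. \<forall>z\<in>Cs!i. z \<le> r \<or> s \<le> z \<or> (i < length ys \<and> z = ys!i))"
    unfolding All_less_Suc2 by simp
  finally show ?thesis by (simp add: cls_def)
qed

lemma cls_Cons: "cls r s ys (C#Cs) \<longleftrightarrow> (\<forall>z\<in>C. z \<le> r \<or> s \<le> z \<or> (ys \<noteq> [] \<and> z = hd ys)) \<and> cls r s (tl ys) Cs"
proof (cases ys)
  case Nil then show ?thesis by (simp add: cls_Nil_list)
next
  case (Cons y ys')
  then show ?thesis by (simp add: cls_Cons2)
qed

lemma hasr_Nil[simp]: "hasr [] Cs" by (simp add: hasr_def)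
lemma hasr_Cons_Nil[simp]: "\<not> hasr (y#ys) []" by (simp add: hasr_def)
lemma hasr_Cons[simp]: "hasr (y#ys) (C#Cs) \<longleftrightarrow> y \<in> C \<and> hasr ys Cs"
  by (auto simp: hasr_def less_Suc_eq_0_disj)

lemma rchain:
  assumes "\<forall>C\<in>set Cs. finite C" "r < x" "x < s" "sorted_wrt (<) (x#ys)" "\<forall>y\<in>set ys. y < s"
    "hasr ys Cs" "cls r s ys Cs" "at Cs p s" "length ys \<le> p"
  shows "hasr (x#ys) (ins x Cs) \<and> cls r s (x#ys) (ins x Cs)
     \<and> at (ins x Cs) (if p = length ys then Suc p else p) s"
  using assms
proof (induction ys arbitrary: Cs x p)
  case Nil
  then obtain C Cs'' where Cs: "Cs = C # Cs''" by (cases Cs) auto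
  have fin: "finite C" "\<forall>C\<in>set Cs''. finite C" using Nil.prems Cs by auto
  have clC: "\<forall>z\<in>C. z \<le> r \<or> s \<le> z" and cl2: "\<forall>C\<in>set Cs''. \<forall>z\<in>C. z \<le> r \<or> s \<le> z"
    using Nil.prems(7) Cs by (auto simp: cls_Nil_list)
  show ?case
  proof (cases "\<exists>z\<in>C. x < z")
    case True
    define b where "b = Min {z\<in>C. x < z}"
    have b: "b \<in> C" "x < b" "\<And>z. z \<in> C \<Longrightarrow> x < z \<Longrightarrow> b \<le> z"
      using min_props[OF fin(1) True] unfolding b_def by auto
    have bs: "s \<le> b" using b clC Nil.prems(2) by force
    have e: "ins x Cs = insert x (C - {b}) # ins b Cs''" using True b_def Cs by simp
    have u: "\<forall>D\<in>set (ins b Cs''). \<forall>z\<in>D. z \<le> r \<or> s \<le> z"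
      using ins_union[OF fin(2)] cl2 bs by fastforce
    have h1: "hasr [x] (ins x Cs)" "cls r s [x] (ins x Cs)"
      unfolding e using u clC by (auto simp: cls_Cons cls_Nil_list)
    show ?thesis
    proof (cases p)
      case 0
      then have "s \<in> C" using Nil.prems Cs by simp
      then have "b = s" using b(3)[of s] bs Nil.prems(3) by simp
      then show ?thesis using h1 e 0 ins_first[of s Cs''] Nil.prems(3) by simp
    next
      case (Suc p')
      then have "s \<notin> C" "at Cs'' p' s" using Nil.prems Cs by auto
      then have "s < b" using b bs by (metis order_le_less)
      then have "at (ins b Cs'') p' s" using ins_less[OF fin(2)] \<open>at Cs'' p' s\<close> by blast
      then show ?thesis using h1 e Suc \<open>s \<notin> C\<close> Nil.prems(3) by simp
    qed
  next
    case False
    have e: "ins x Cs = insert x C # Cs''" using False Cs by simp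
    have h1: "hasr [x] (ins x Cs)" "cls r s [x] (ins x Cs)"
      unfolding e using cl2 clC by (auto simp: cls_Cons cls_Nil_list)
    show ?thesis
    proof (cases p)
      case 0
      then have "s \<in> C" using Nil.prems Cs by simp
      then show ?thesis using False Nil.prems(3) by blast
    next
      case (Suc p')
      then show ?thesis using h1 e Nil.prems Cs by simp
    qed
  qed
next
  case (Cons y ys')
  then obtain C Cs'' where Cs: "Cs = C # Cs''" by (cases Cs) auto
  have fin: "finite C" "\<forall>C\<in>set Cs''. finite C" using Cons.prems Cs by auto
  have yC: "y \<in> C" and hr: "hasr ys' Cs''" using Cons.prems(6) Cs by auto
  have clC: "\<forall>z\<in>C. z \<le> r \<or> s \<le> z \<or> z = y" and cl2: "cls r s ys' Cs''"
    using Cons.prems(7) Cs by (auto simp: cls_Cons)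
  have xy: "x < y" and sy: "sorted_wrt (<) (y#ys')" using Cons.prems(4) by auto
  have ys: "y < s" "\<forall>y\<in>set ys'. y < s" using Cons.prems(5) by auto
  obtain p' where p: "p = Suc p'" using Cons.prems(9) by (cases p) auto
  have sC: "s \<notin> C" and at2: "at Cs'' p' s" using Cons.prems(8) Cs p by auto
  have True: "\<exists>z\<in>C. x < z" using yC xy by blast
  define b where "b = Min {z\<in>C. x < z}"
  have b: "b \<in> C" "x < b" "\<And>z. z \<in> C \<Longrightarrow> x < z \<Longrightarrow> b \<le> z"
    using min_props[OF fin(1) True] unfolding b_def by auto
  have "b \<le> y" using b(3) yC xy by simp
  then have "b = y" using clC b(1,2) Cons.prems(2) ys(1) by force
  have e: "ins x Cs = insert x (C - {y}) # ins y Cs''" using True b_def \<open>b = y\<close> Cs by simp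
  have IH: "hasr (y#ys') (ins y Cs'') \<and> cls r s (y#ys') (ins y Cs'')
     \<and> at (ins y Cs'') (if p' = length ys' then Suc p' else p') s"
    using Cons.IH[OF fin(2) _ ys(1) sy ys(2) hr cl2 at2] Cons.prems(2,9) xy p by simp
  have "cls r s (x#y#ys') (ins x Cs)" unfolding e cls_Cons using IH clC by auto
  moreover have "hasr (x#y#ys') (ins x Cs)" unfolding e using IH by simp
  moreover have "s \<notin> insert x (C - {y})" using sC Cons.prems(3) by auto
  ultimately show ?case using e IH p by auto
qed


lemma fold_entries: "entries (fold col_insert (rev l) T) = entries T \<union> set l"
  by (induction l) (auto simp: col_insert_entries)

lemma part2:
  assumes gap: "\<forall>x\<in>entries T. x \<le> r \<or> s \<le> x" and lr: "\<forall>x\<in>set l. r < x"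
  shows "col (fold col_insert (rev l) T) s' = col T s'
    \<or> col (fold col_insert (rev l) T) s' \<le> Suc (length l + card {x\<in>entries T. s \<le> x \<and> x < s'})"
  using lr
proof (induction l)
  case Nil then show ?case by simp
next
  case (Cons a l)
  define T1 where "T1 = fold col_insert (rev l) T"
  define n where "n = card {x\<in>entries T. s \<le> x \<and> x < s'}"
  have e: "fold col_insert (rev (a#l)) T = col_insert a T1" by (simp add: T1_def)
  have IH: "col T1 s' = col T s' \<or> col T1 s' \<le> Suc (length l + n)"
    using Cons unfolding T1_def n_def by simp
  show ?case
  proof (cases "col (col_insert a T1) s' = col T1 s'")
    case True
    then show ?thesis using IH e unfolding n_def by auto
  next
    case False
    have b: "col (col_insert a T1) s' \<le> Suc (card {z \<in> insert a (entries T1). a \<le> z \<and> z < s'})"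
      using col_insert_bound[OF False] .
    have "{z \<in> insert a (entries T1). a \<le> z \<and> z < s'} \<subseteq> set (a#l) \<union> {x\<in>entries T. s \<le> x \<and> x < s'}"
      using gap Cons.prems unfolding T1_def fold_entries by force
    then have "card {z \<in> insert a (entries T1). a \<le> z \<and> z < s'} \<le> card (set (a#l) \<union> {x\<in>entries T. s \<le> x \<and> x < s'})"
      by (intro card_mono) auto
    also have "\<dots> \<le> card (set (a#l)) + n" unfolding n_def by (rule card_Un_le)
    also have "\<dots> \<le> length (a#l) + n" using card_length[of "a#l"] by linarith
    finally show ?thesis using b e unfolding n_def by simp
  qed
qed

lemma main_inv:
  fixes T :: tableau and r s :: int and l :: "int list"
  assumes std: "\<forall>c\<in>set T. sorted_wrt (<) c" "distinct (concat T)"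
    and gap: "\<forall>x\<in>entries T. x \<le> r \<or> s \<le> x"
    and sT: "at (map set T) c0 s"
  shows "sorted_wrt (<) l \<Longrightarrow> \<forall>x\<in>set l. r < x \<and> x < s \<Longrightarrow>
   (\<forall>c\<in>set (fold col_insert (rev l) T). sorted_wrt (<) c) \<and> distinct (concat (fold col_insert (rev l) T))
   \<and> hasr l (map set (fold col_insert (rev l) T)) \<and> cls r s l (map set (fold col_insert (rev l) T))
   \<and> at (map set (fold col_insert (rev l) T)) (max c0 (length l)) s"
proof (induction l)
  case Nil
  have "cls r s [] (map set T)" using gap unfolding cls_Nil_list entries_def by auto
  then show ?case using std sT by simp
next
  case (Cons a l)
  define T1 where "T1 = fold col_insert (rev l) T"
  have e: "fold col_insert (rev (a#l)) T = col_insert a T1" by (simp add: T1_def)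
  have sl: "sorted_wrt (<) l" and al: "\<forall>y\<in>set l. a < y" using Cons.prems(1) by auto
  have ra: "r < a" "a < s" using Cons.prems(2) by auto
  have IH: "(\<forall>c\<in>set T1. sorted_wrt (<) c) \<and> distinct (concat T1) \<and> hasr l (map set T1)
     \<and> cls r s l (map set T1) \<and> at (map set T1) (max c0 (length l)) s"
    using Cons.IH sl Cons.prems(2) unfolding T1_def by simp
  have "a \<notin> entries T1" unfolding T1_def fold_entries using gap ra al by force
  then have S: "map set (col_insert a T1) = ins a (map set T1) \<and> (\<forall>c\<in>set (col_insert a T1). sorted_wrt (<) c)
     \<and> distinct (concat (col_insert a T1))"
    using col_insert_sets IH by blast
  have R: "hasr (a#l) (ins a (map set T1)) \<and> cls r s (a#l) (ins a (map set T1))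
     \<and> at (ins a (map set T1)) (if max c0 (length l) = length l then Suc (max c0 (length l)) else max c0 (length l)) s"
    by (rule rchain) (use IH ra Cons.prems in auto)
  have "(if max c0 (length l) = length l then Suc (max c0 (length l)) else max c0 (length l)) = max c0 (length (a#l))"
    by auto
  then show ?case using S R e by simp
qed


theorem lemma2p3:
  fixes T :: tableau and s r :: int and k :: nat and rs :: "int list"
  assumes "standard T"
    and "\<forall>x\<in>entries T. 0 < x"
    and "s \<in> entries T"
    and "r < s"
    and "\<forall>x\<in>entries T. \<not> (r < x \<and> x < s)"
    and "0 < k" and "int k \<le> s - r"
    and "length rs = k - 1"
    and "sorted_wrt (<) rs"
    and "\<forall>x\<in>set rs. r < x \<and> x < s"
  shows "(\<forall>i < k - 1. col (fold col_insert (rev rs) T) (rs ! i) = i + 1)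
       \<and> col (fold col_insert (rev rs) T) s = max (col T s) k
       \<and> (\<forall>s'\<in>entries T. s < s' \<longrightarrow>
            col (fold col_insert (rev rs) T) s' = col T s'
          \<or> col (fold col_insert (rev rs) T) s'
              \<le> max (col T s) k + card {x\<in>entries T. s \<le> x \<and> x < s'})"
proof -
  define T' where "T' = fold col_insert (rev rs) T"
  have std: "\<forall>c\<in>set T. sorted_wrt (<) c" "distinct (concat T)"
    using assms(1) unfolding standard_def by (auto simp: all_set_conv_all_nth)
  have gap: "\<forall>x\<in>entries T. x \<le> r \<or> s \<le> x" using assms(5) by force
  define c0 where "c0 = col T s - 1"
  have sT: "at (map set T) c0 s" unfolding c0_def by (rule at_col[OF assms(3)])
  have cT: "col T s = Suc c0" using col_at[OF sT] .
  have M: "hasr rs (map set T') \<and> cls r s rs (map set T') \<and> at (map set T') (max c0 (length rs)) s"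
    using main_inv[OF std gap sT assms(9,10)] unfolding T'_def by blast
  have P1: "col T' (rs ! i) = i + 1" if i: "i < k - 1" for i
  proof -
    have hi: "i < length (map set T')" "rs ! i \<in> map set T' ! i"
      using M i assms(8) unfolding hasr_def by auto
    have ri: "r < rs ! i" "rs ! i < s" using assms(10) i assms(8) by auto
    have "rs ! i \<notin> map set T' ! i'" if "i' < i" for i'
    proof
      assume "rs ! i \<in> map set T' ! i'"
      then have "rs ! i \<le> r \<or> s \<le> rs ! i \<or> (i' < length rs \<and> rs ! i = rs ! i')"
        using M that hi(1) unfolding cls_def by auto
      moreover have "rs ! i' < rs ! i" using assms(9) that i assms(8)
        by (simp add: sorted_wrt_iff_nth_less)
      ultimately show False using ri by auto
    qed
    then have "at (map set T') i (rs ! i)" using hi unfolding at_def by blast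
    then show ?thesis using col_at by simp
  qed
  have P2: "col T' s = max (col T s) k"
    using col_at[of T' "max c0 (length rs)" s] M cT assms(6,8) by simp
  have P3: "col T' s' = col T s' \<or> col T' s' \<le> max (col T s) k + card {x\<in>entries T. s \<le> x \<and> x < s'}" for s'
    using part2[OF gap, of rs s'] assms(10) assms(6,8) unfolding T'_def by auto
  show ?thesis using P1 P2 P3 unfolding T'_def by blast
qed

end
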